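(* Let $\lambda>0$ not be a fusion value, let $C_1,\dots,C_K$ be the clusters of the minimizer $\mathbf x^*$ of (P), and let $\boldsymbol\delta^a$ be a point in the relative interior of the set of $\boldsymbol\delta$-components of optimal solutions of (D-SOCP). Define $r:=\min\{\lambda-\|\boldsymbol\delta^a_{ll'}\|: l<l',\ l,l'\in C_k\text{ for some }k\}$ (over pairs in a common cluster). Then $r>0$. Moreover, if $\boldsymbol\delta$ satisfies $\|\boldsymbol\delta_{ij}-\boldsymbol\delta^a_{ij}\|\le p'\mu$ for all $i<j$, then $\|\boldsymbol\delta_{ij}\|\le\lambda-r+p'\mu$ for all $i<j$ in a common cluster.
   Context: Data: $n\ge2$, $d\ge1$, $\mathbf a_i\in\mathbb R^d$, $r_i>0$, $\lambda>0$. (P): minimize $\frac12\sum_ir_i\|\mathbf x_i-\mathbf a_i\|^2+\lambda\sum_{i<j}r_ir_j\|\mathbf x_i-\mathbf x_j\|$, minimizer $\mathbf x^*(\lambda)$, clusters = classes of $i\sim j\iff\mathbf x_i^*=\mathbf x_j^*$. $\lambda_0>0$ is a fusion value if some $i\ne j$ have $\mathbf x_i^*(\lambda_0)=\mathbf x_j^*(\lambda_0)$ but $\mathbf x_i^*(\lambda)\ne\mathbf x_j^*(\lambda)$ for all $\lambda<\lambda_0$. Antisymmetric notation $\mathbf v_{\langle ij\rangle}=\mathbf v_{ij}$ ($i<j$), $-\mathbf v_{ji}$ ($i>j$), $\mathbf 0$ ($i=j$). (D-SOCP): maximize $\sum_ir_i\mathbf a_i^T\boldsymbol\beta_i+\sum_ir_i\gamma_i$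 over $\boldsymbol\delta_{ij},\boldsymbol\beta_i\in\mathbb R^d$, $\gamma_i\in\mathbb R$ s.t. $\sum_jr_j\boldsymbol\delta_{\langle ij\rangle}+\boldsymbol\beta_i=\mathbf 0$, $\|\boldsymbol\delta_{ij}\|\le\lambda$, $1-\gamma_i\ge\|(\boldsymbol\beta_i,\gamma_i)\|$. $p'\ge0$, $\mu\ge0$ are real numbers. *)

theory Defs
  imports "HOL-Analysis.Analysis"
begin

text \<open>Index set: a finite linearly ordered type 'i (the indices 1..n); points live in
  a Euclidean space 'a (= R^d). Weights r_i are called w here.\<close>

definition primal_obj :: "('i::{finite,linorder} \<Rightarrow> 'a::euclidean_space) \<Rightarrow> ('i \<Rightarrow> real) \<Rightarrow> real \<Rightarrow> ('i \<Rightarrow> 'a) \<Rightarrow> real" where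
  "primal_obj a w lam x =
     (1/2) * (\<Sum>i\<in>UNIV. w i * (norm (x i - a i))\<^sup>2)
     + lam * (\<Sum>i\<in>UNIV. \<Sum>j\<in>{j. i < j}. w i * w j * norm (x i - x j))"

text \<open>The minimizer x*(lambda) of (P) (unique for lambda >= 0 by strict convexity).\<close>
definition xstar :: "('i::{finite,linorder} \<Rightarrow> 'a::euclidean_space) \<Rightarrow> ('i \<Rightarrow> real) \<Rightarrow> real \<Rightarrow> ('i \<Rightarrow> 'a)" where
  "xstar a w lam = (THE x. \<forall>y. primal_obj a w lam x \<le> primal_obj a w lam y)"

definition same_cluster :: "('i::{finite,linorder} \<Rightarrow> 'a::euclidean_space) \<Rightarrow> ('i \<Rightarrow> real) \<Rightarrow> real \<Rightarrow> 'i \<Rightarrow> 'i \<Rightarrow> bool" where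
  "same_cluster a w lam i j \<longleftrightarrow> xstar a w lam i = xstar a w lam j"

definition fusion_value :: "('i::{finite,linorder} \<Rightarrow> 'a::euclidean_space) \<Rightarrow> ('i \<Rightarrow> real) \<Rightarrow> real \<Rightarrow> bool" where
  "fusion_value a w lam0 \<longleftrightarrow> lam0 > 0 \<and>
     (\<exists>i j. i \<noteq> j \<and> xstar a w lam0 i = xstar a w lam0 j \<and>
        (\<forall>lam. 0 < lam \<and> lam < lam0 \<longrightarrow> xstar a w lam i \<noteq> xstar a w lam j))"

definition anti :: "(('a::real_normed_vector, 'i::{finite,linorder}) vec, 'i) vec \<Rightarrow> 'i \<Rightarrow> 'i \<Rightarrow> 'a" where
  "anti v i j = (if i < j then v$i$j else if j < i then - (v$j$i) else 0)"

text \<open>(D-SOCP). Only the entries delta$i$j with i < j are variables.\<close>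
definition dsocp_feasible :: "('i::{finite,linorder} \<Rightarrow> real) \<Rightarrow> real \<Rightarrow> (('a::euclidean_space, 'i) vec, 'i) vec \<Rightarrow> ('i \<Rightarrow> 'a) \<Rightarrow> ('i \<Rightarrow> real) \<Rightarrow> bool" where
  "dsocp_feasible w lam \<delta> \<beta> \<gamma> \<longleftrightarrow>
     (\<forall>i. (\<Sum>j\<in>UNIV. w j *\<^sub>R anti \<delta> i j) + \<beta> i = 0) \<and>
     (\<forall>i j. i < j \<longrightarrow> norm (\<delta>$i$j) \<le> lam) \<and>
     (\<forall>i. norm (\<beta> i, \<gamma> i) \<le> 1 - \<gamma> i)"

definition dsocp_obj :: "('i::{finite,linorder} \<Rightarrow> 'a::euclidean_space) \<Rightarrow> ('i \<Rightarrow> real) \<Rightarrow> ('i \<Rightarrow> 'a) \<Rightarrow> ('i \<Rightarrow> real) \<Rightarrow> real" where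
  "dsocp_obj a w \<beta> \<gamma> = (\<Sum>i\<in>UNIV. w i * (a i \<bullet> \<beta> i)) + (\<Sum>i\<in>UNIV. w i * \<gamma> i)"

definition dsocp_optimal :: "('i::{finite,linorder} \<Rightarrow> 'a::euclidean_space) \<Rightarrow> ('i \<Rightarrow> real) \<Rightarrow> real \<Rightarrow> (('a, 'i) vec, 'i) vec \<Rightarrow> ('i \<Rightarrow> 'a) \<Rightarrow> ('i \<Rightarrow> real) \<Rightarrow> bool" where
  "dsocp_optimal a w lam \<delta> \<beta> \<gamma> \<longleftrightarrow> dsocp_feasible w lam \<delta> \<beta> \<gamma> \<and>
     (\<forall>\<delta>' \<beta>' \<gamma>'. dsocp_feasible w lam \<delta>' \<beta>' \<gamma>' \<longrightarrow> dsocp_obj a w \<beta>' \<gamma>' \<le> dsocp_obj a w \<beta> \<gamma>)"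

text \<open>Set of delta-components of optimal solutions; the unused entries (i >= j) are
  normalized to 0 so that the set lives in the space of the variables delta_ij, i<j.\<close>
definition dsocp_delta_set :: "('i::{finite,linorder} \<Rightarrow> 'a::euclidean_space) \<Rightarrow> ('i \<Rightarrow> real) \<Rightarrow> real \<Rightarrow> ((('a, 'i) vec, 'i) vec) set" where
  "dsocp_delta_set a w lam = {\<delta>. (\<forall>i j. \<not> i < j \<longrightarrow> \<delta>$i$j = 0) \<and> (\<exists>\<beta> \<gamma>. dsocp_optimal a w lam \<delta> \<beta> \<gamma>)}"

definition cluster_pairs :: "('i::{finite,linorder} \<Rightarrow> 'a::euclidean_space) \<Rightarrow> ('i \<Rightarrow> real) \<Rightarrow> real \<Rightarrow> ('i \<times> 'i) set" where
  "cluster_pairs a w lam = {(l, l'). l < l' \<and> same_cluster a w lam l l'}"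

definition cluster_gap :: "('i::{finite,linorder} \<Rightarrow> 'a::euclidean_space) \<Rightarrow> ('i \<Rightarrow> real) \<Rightarrow> real \<Rightarrow> (('a, 'i) vec, 'i) vec \<Rightarrow> real" where
  "cluster_gap a w lam \<delta>a = Min ((\<lambda>(l, l'). lam - norm (\<delta>a$l$l')) ` cluster_pairs a w lam)"

end

theory Submission
  imports Defs
begin

definition sv :: "('i::{finite,linorder} \<Rightarrow> real) \<Rightarrow> (('a::euclidean_space,'i) vec,'i) vec \<Rightarrow> 'i \<Rightarrow> 'a" where
  "sv w \<delta> i = (\<Sum>j\<in>UNIV. w j *\<^sub>R anti \<delta> i j)"

definition xv :: "('i::{finite,linorder} \<Rightarrow> 'a::euclidean_space) \<Rightarrow> ('i \<Rightarrow> real) \<Rightarrow> (('a,'i) vec,'i) vec \<Rightarrow> 'i \<Rightarrow> 'a" where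
  "xv a w \<delta> i = a i + sv w \<delta> i"

definition bv :: "('i::{finite,linorder} \<Rightarrow> real) \<Rightarrow> (('a::euclidean_space,'i) vec,'i) vec \<Rightarrow> 'i \<Rightarrow> 'a" where
  "bv w \<delta> i = - sv w \<delta> i"

definition gv :: "('i::{finite,linorder} \<Rightarrow> real) \<Rightarrow> (('a::euclidean_space,'i) vec,'i) vec \<Rightarrow> 'i \<Rightarrow> real" where
  "gv w \<delta> i = (1 - (norm (bv w \<delta> i))\<^sup>2) / 2"

definition KKT :: "('i::{finite,linorder} \<Rightarrow> 'a::euclidean_space) \<Rightarrow> ('i \<Rightarrow> real) \<Rightarrow> real \<Rightarrow> (('a,'i) vec,'i) vec \<Rightarrow> bool" where
  "KKT a w lam \<delta> \<longleftrightarrow> (\<forall>i j. i < j \<longrightarrow> norm (\<delta>$i$j) \<le> lam \<and>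
      \<delta>$i$j \<bullet> (xv a w \<delta> j - xv a w \<delta> i) = lam * norm (xv a w \<delta> j - xv a w \<delta> i))"

lemma anti_swap: "anti v i j = - anti v j i"
  by (auto simp: anti_def)

lemma anti_same[simp]: "anti v i i = 0"
  by (auto simp: anti_def)

lemma pair_split:
  fixes g :: "'i::{finite,linorder} \<Rightarrow> 'i \<Rightarrow> 'b::comm_monoid_add"
  shows "(\<Sum>i\<in>UNIV. \<Sum>j\<in>UNIV. g i j) = (\<Sum>i\<in>UNIV. \<Sum>j\<in>{j. i < j}. g i j + g j i) + (\<Sum>i\<in>UNIV. g i i)"
proof -
  have split: "(\<Sum>j\<in>UNIV. g i j) = (\<Sum>j\<in>{j. i < j}. g i j) + (\<Sum>j\<in>{j. j < i}. g i j) + g i i" for i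
  proof -
    have "UNIV = {j. i < j} \<union> {j. j < i} \<union> {i}" by auto
    then have "(\<Sum>j\<in>UNIV. g i j) = (\<Sum>j\<in>{j. i < j} \<union> {j. j < i} \<union> {i}. g i j)" by simp
    also have "\<dots> = (\<Sum>j\<in>{j. i < j} \<union> {j. j < i}. g i j) + g i i"
      by (subst sum.union_disjoint) auto
    also have "(\<Sum>j\<in>{j. i < j} \<union> {j. j < i}. g i j) = (\<Sum>j\<in>{j. i < j}. g i j) + (\<Sum>j\<in>{j. j < i}. g i j)"
      by (subst sum.union_disjoint) auto
    finally show ?thesis .
  qed
  have sw: "(\<Sum>i\<in>UNIV. \<Sum>j\<in>{j. j < i}. g i j) = (\<Sum>j\<in>UNIV. \<Sum>i\<in>{i. j < i}. g i j)"
    using sum.swap_restrict[of "UNIV::'i set" "UNIV::'i set" g "\<lambda>i j. j < i"] by simp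
  show ?thesis
    unfolding split sum.distrib sw by (simp add: add_ac)
qed

lemma sv_inner:
  fixes y :: "'i::{finite,linorder} \<Rightarrow> 'a::euclidean_space"
  shows "(\<Sum>i\<in>UNIV. w i * (y i \<bullet> sv w \<delta> i)) = (\<Sum>i\<in>UNIV. \<Sum>j\<in>{j. i < j}. w i * w j * (\<delta>$i$j \<bullet> (y i - y j)))"
proof -
  have "(\<Sum>i\<in>UNIV. w i * (y i \<bullet> sv w \<delta> i)) = (\<Sum>i\<in>UNIV. \<Sum>j\<in>UNIV. w i * w j * (y i \<bullet> anti \<delta> i j))"
    unfolding sv_def by (simp add: inner_sum_right sum_distrib_left mult.assoc)
  also have "\<dots> = (\<Sum>i\<in>UNIV. \<Sum>j\<in>{j. i < j}. w i * w j * (y i \<bullet> anti \<delta> i j) + w j * w i * (y j \<bullet> anti \<delta> j i))"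
    by (subst pair_split) simp
  also have "\<dots> = (\<Sum>i\<in>UNIV. \<Sum>j\<in>{j. i < j}. w i * w j * (\<delta>$i$j \<bullet> (y i - y j)))"
    by (intro sum.cong refl) (auto simp: anti_def inner_diff_right inner_commute algebra_simps)
  finally show ?thesis .
qed


lemma feas_beta: "dsocp_feasible w lam \<delta> \<beta> \<gamma> \<Longrightarrow> \<beta> i = - sv w \<delta> i"
  unfolding dsocp_feasible_def sv_def by (metis add.commute add_eq_0_iff)

lemma gamma_bound:
  assumes "norm (b, g) \<le> 1 - g"
  shows "g \<le> (1 - (norm b)\<^sup>2) / 2"
proof -
  have "sqrt ((norm b)\<^sup>2 + (norm g)\<^sup>2) \<le> 1 - g" using assms by (simp add: norm_Pair)
  moreover have "0 \<le> sqrt ((norm b)\<^sup>2 + (norm g)\<^sup>2)" by simp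
  ultimately have "(sqrt ((norm b)\<^sup>2 + (norm g)\<^sup>2))\<^sup>2 \<le> (1 - g)\<^sup>2"
    by (meson power_mono)
  then have "(norm b)\<^sup>2 + g\<^sup>2 \<le> (1 - g)\<^sup>2" by simp
  then show ?thesis by (simp add: power2_eq_square algebra_simps)
qed

lemma quad_bound:
  fixes a b y :: "'a::real_inner"
  shows "a \<bullet> b - (norm b)\<^sup>2 / 2 \<le> y \<bullet> b + (norm (y - a))\<^sup>2 / 2"
proof -
  have "0 \<le> (norm (b - (a - y)))\<^sup>2" by simp
  also have "(norm (b - (a - y)))\<^sup>2 = (norm b)\<^sup>2 - 2 * (b \<bullet> (a - y)) + (norm (y - a))\<^sup>2"
    by (simp add: power2_norm_eq_inner inner_diff_left inner_diff_right inner_commute algebra_simps)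
  finally show ?thesis by (simp add: inner_diff_right inner_commute algebra_simps)
qed

lemma quad_eq:
  fixes a x :: "'a::real_inner"
  shows "a \<bullet> (a - x) - (norm (a - x))\<^sup>2 / 2 = x \<bullet> (a - x) + (norm (x - a))\<^sup>2 / 2"
  by (simp add: power2_norm_eq_inner inner_diff_left inner_diff_right inner_commute algebra_simps)

lemma inner_le_lam:
  fixes u v :: "'a::real_inner"
  assumes "norm u \<le> lam"
  shows "u \<bullet> v \<le> lam * norm v"
  by (metis Cauchy_Schwarz_ineq2 assms mult_right_mono norm_ge_zero order_trans abs_le_D1)

lemma weak_duality:
  fixes \<delta> :: "(('a::euclidean_space,'i::{finite,linorder}) vec, 'i) vec"
  assumes feas: "dsocp_feasible w lam \<delta> \<beta> \<gamma>" and w: "\<forall>i. w i > 0"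
  shows "dsocp_obj a w \<beta> \<gamma> \<le> sum w UNIV / 2 + primal_obj a w lam y"
proof -
  have b: "\<beta> i = - sv w \<delta> i" for i using feas_beta[OF feas] .
  have g: "\<gamma> i \<le> (1 - (norm (\<beta> i))\<^sup>2) / 2" for i
    using feas gamma_bound unfolding dsocp_feasible_def by blast
  have nb: "\<forall>i j. i < j \<longrightarrow> norm (\<delta>$i$j) \<le> lam" using feas unfolding dsocp_feasible_def by blast
  have "dsocp_obj a w \<beta> \<gamma> = (\<Sum>i\<in>UNIV. w i * (a i \<bullet> \<beta> i + \<gamma> i))"
    unfolding dsocp_obj_def by (simp add: sum.distrib distrib_left)
  also have "\<dots> \<le> (\<Sum>i\<in>UNIV. w i * (1/2 + y i \<bullet> \<beta> i + (norm (y i - a i))\<^sup>2 / 2))"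
  proof (intro sum_mono mult_left_mono)
    fix i
    show "a i \<bullet> \<beta> i + \<gamma> i \<le> 1/2 + y i \<bullet> \<beta> i + (norm (y i - a i))\<^sup>2 / 2"
      using g[of i] quad_bound[of "a i" "\<beta> i" "y i"] by simp
    show "0 \<le> w i" using w by (simp add: less_imp_le)
  qed
  also have "\<dots> = sum w UNIV / 2 + (\<Sum>i\<in>UNIV. w i * (y i \<bullet> \<beta> i)) + (1/2) * (\<Sum>i\<in>UNIV. w i * (norm (y i - a i))\<^sup>2)"
    by (simp add: sum.distrib distrib_left sum_distrib_left sum_divide_distrib algebra_simps)
  also have "(\<Sum>i\<in>UNIV. w i * (y i \<bullet> \<beta> i)) = - (\<Sum>i\<in>UNIV. w i * (y i \<bullet> sv w \<delta> i))"
    by (simp add: b sum_negf)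
  also have "\<dots> = (\<Sum>i\<in>UNIV. \<Sum>j\<in>{j. i < j}. w i * w j * (\<delta>$i$j \<bullet> (y j - y i)))"
    unfolding sv_inner by (simp add: sum_negf[symmetric] inner_diff_right algebra_simps)
  also have "\<dots> \<le> (\<Sum>i\<in>UNIV. \<Sum>j\<in>{j. i < j}. w i * w j * (lam * norm (y i - y j)))"
  proof (intro sum_mono mult_left_mono)
    fix i j :: 'i assume "j \<in> {j. i < j}"
    then have "norm (\<delta>$i$j) \<le> lam" using nb by auto
    then have "\<delta>$i$j \<bullet> (y j - y i) \<le> lam * norm (y j - y i)"
      by (rule inner_le_lam)
    then show "\<delta>$i$j \<bullet> (y j - y i) \<le> lam * norm (y i - y j)" by (simp add: norm_minus_commute)
    show "0 \<le> w i * w j" using w by (simp add: less_imp_le)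
  qed
  also have "\<dots> = lam * (\<Sum>i\<in>UNIV. \<Sum>j\<in>{j. i < j}. w i * w j * norm (y i - y j))"
    by (simp add: sum_distrib_left algebra_simps)
  finally show ?thesis unfolding primal_obj_def by simp
qed

lemma kkt_feasible:
  assumes "\<forall>i j. i < j \<longrightarrow> norm (\<delta>$i$j) \<le> lam"
  shows "dsocp_feasible w lam \<delta> (bv w \<delta>) (gv w \<delta>)"
proof -
  have "norm (bv w \<delta> i, gv w \<delta> i) \<le> 1 - gv w \<delta> i" for i
  proof -
    let ?b = "norm (bv w \<delta> i)"
    have "(norm (bv w \<delta> i, gv w \<delta> i))\<^sup>2 = ?b\<^sup>2 + ((1 - ?b\<^sup>2)/2)\<^sup>2"
      by (simp add: norm_Pair gv_def power_divide)
    also have "\<dots> = ((1 + ?b\<^sup>2)/2)\<^sup>2" by (simp add: power2_eq_square field_simps)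
    finally have "norm (bv w \<delta> i, gv w \<delta> i) = (1 + ?b\<^sup>2)/2"
      by (metis norm_ge_zero real_sqrt_unique zero_le_power2 add_nonneg_nonneg divide_nonneg_pos zero_less_numeral zero_le_one)
    then show ?thesis by (simp add: gv_def field_simps)
  qed
  then show ?thesis using assms unfolding dsocp_feasible_def bv_def sv_def by simp
qed

lemma kkt_value:
  assumes "KKT a w lam \<delta>"
  shows "dsocp_obj a w (bv w \<delta>) (gv w \<delta>) = sum w UNIV / 2 + primal_obj a w lam (xv a w \<delta>)"
proof -
  let ?x = "xv a w \<delta>"
  have b: "bv w \<delta> i = a i - ?x i" for i by (simp add: bv_def xv_def)
  have "dsocp_obj a w (bv w \<delta>) (gv w \<delta>) = (\<Sum>i\<in>UNIV. w i * (1/2 + (a i \<bullet> (a i - ?x i) - (norm (a i - ?x i))\<^sup>2 / 2)))"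
    unfolding dsocp_obj_def gv_def b by (simp add: sum.distrib[symmetric] algebra_simps diff_divide_distrib)
  also have "\<dots> = (\<Sum>i\<in>UNIV. w i * (1/2 + (?x i \<bullet> (a i - ?x i) + (norm (?x i - a i))\<^sup>2 / 2)))"
    by (simp only: quad_eq)
  also have "\<dots> = sum w UNIV / 2 + (\<Sum>i\<in>UNIV. w i * (?x i \<bullet> bv w \<delta> i)) + (1/2) * (\<Sum>i\<in>UNIV. w i * (norm (?x i - a i))\<^sup>2)"
    unfolding b[symmetric] by (simp add: sum.distrib distrib_left sum_distrib_left sum_divide_distrib algebra_simps)
  also have "(\<Sum>i\<in>UNIV. w i * (?x i \<bullet> bv w \<delta> i)) = - (\<Sum>i\<in>UNIV. w i * (?x i \<bullet> sv w \<delta> i))"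
    by (simp add: bv_def sum_negf)
  also have "\<dots> = (\<Sum>i\<in>UNIV. \<Sum>j\<in>{j. i < j}. w i * w j * (\<delta>$i$j \<bullet> (?x j - ?x i)))"
    unfolding sv_inner by (simp add: sum_negf[symmetric] inner_diff_right algebra_simps)
  also have "\<dots> = (\<Sum>i\<in>UNIV. \<Sum>j\<in>{j. i < j}. w i * w j * (lam * norm (?x i - ?x j)))"
    using assms unfolding KKT_def by (intro sum.cong refl) (auto simp: norm_minus_commute)
  also have "\<dots> = lam * (\<Sum>i\<in>UNIV. \<Sum>j\<in>{j. i < j}. w i * w j * norm (?x i - ?x j))"
    by (simp add: sum_distrib_left algebra_simps)
  finally show ?thesis unfolding primal_obj_def by simp
qed


lemma parallelogram_half:
  fixes u v :: "'a::real_inner"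
  shows "(norm ((1/2) *\<^sub>R (u + v)))\<^sup>2 = ((norm u)\<^sup>2 + (norm v)\<^sup>2) / 2 - (norm (u - v))\<^sup>2 / 4"
  by (simp add: power2_norm_eq_inner inner_add_left inner_add_right inner_diff_left inner_diff_right inner_commute field_simps)

lemma minimizer_unique:
  fixes x z :: "'i::{finite,linorder} \<Rightarrow> 'a::euclidean_space"
  assumes w: "\<forall>i. w i > 0" and lam: "lam \<ge> 0"
    and mx: "\<forall>y. primal_obj a w lam x \<le> primal_obj a w lam y"
    and mz: "\<forall>y. primal_obj a w lam z \<le> primal_obj a w lam y"
  shows "x = z"
proof -
  define m where "m i = (1/2) *\<^sub>R (x i + z i)" for i
  have q: "(norm (m i - a i))\<^sup>2 = ((norm (x i - a i))\<^sup>2 + (norm (z i - a i))\<^sup>2) / 2 - (norm (x i - z i))\<^sup>2 / 4" for i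
  proof -
    have "m i - a i = (1/2) *\<^sub>R ((x i - a i) + (z i - a i))" by (simp add: m_def algebra_simps) (metis scaleR_add_left field_sum_of_halves scaleR_one)
    then show ?thesis using parallelogram_half[of "x i - a i" "z i - a i"] by simp
  qed
  have n: "norm (m i - m j) \<le> (norm (x i - x j) + norm (z i - z j)) / 2" for i j
  proof -
    have "m i - m j = (1/2) *\<^sub>R ((x i - x j) + (z i - z j))" by (simp add: m_def algebra_simps)
    then have "norm (m i - m j) = (1/2) * norm ((x i - x j) + (z i - z j))" by simp
    also have "\<dots> \<le> (1/2) * (norm (x i - x j) + norm (z i - z j))" by (intro mult_left_mono norm_triangle_ineq) auto
    finally show ?thesis by simp
  qed
  let ?Q = "\<lambda>y. (\<Sum>i\<in>UNIV. w i * (norm (y i - a i))\<^sup>2)"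
  let ?N = "\<lambda>y. (\<Sum>i\<in>UNIV. \<Sum>j\<in>{j. i < j}. w i * w j * norm (y i - y j))"
  have P: "primal_obj a w lam y = (1/2) * ?Q y + lam * ?N y" for y unfolding primal_obj_def ..
  have Qm: "?Q m = (?Q x + ?Q z) / 2 - (\<Sum>i\<in>UNIV. w i * (norm (x i - z i))\<^sup>2) / 4"
    unfolding q by (simp add: sum.distrib sum_subtractf sum_divide_distrib algebra_simps diff_divide_distrib add_divide_distrib sum_distrib_left)
  have Nm: "?N m \<le> (?N x + ?N z) / 2"
  proof -
    have "?N m \<le> (\<Sum>i\<in>UNIV. \<Sum>j\<in>{j. i < j}. w i * w j * ((norm (x i - x j) + norm (z i - z j)) / 2))"
      using w by (intro sum_mono mult_left_mono n) (auto simp: less_imp_le)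
    also have "\<dots> = (?N x + ?N z) / 2"
      by (simp add: sum.distrib sum_divide_distrib algebra_simps add_divide_distrib)
    finally show ?thesis .
  qed
  have "primal_obj a w lam x \<le> primal_obj a w lam m" using mx by blast
  also have "\<dots> \<le> (primal_obj a w lam x + primal_obj a w lam z) / 2 - (\<Sum>i\<in>UNIV. w i * (norm (x i - z i))\<^sup>2) / 8"
    unfolding P Qm using mult_left_mono[OF Nm lam] by (simp add: field_simps)
  finally have "(\<Sum>i\<in>UNIV. w i * (norm (x i - z i))\<^sup>2) \<le> 0"
    using mx[rule_format, of z] mz[rule_format, of x] by (simp add: field_simps)
  moreover have "\<forall>i\<in>UNIV. 0 \<le> w i * (norm (x i - z i))\<^sup>2" using w by (simp add: less_imp_le)
  ultimately have "(\<Sum>i\<in>UNIV. w i * (norm (x i - z i))\<^sup>2) = 0"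
    by (meson antisym sum_nonneg)
  then have "\<forall>i\<in>UNIV. w i * (norm (x i - z i))\<^sup>2 = 0"
    using sum_nonneg_eq_0_iff[of UNIV "\<lambda>i. w i * (norm (x i - z i))\<^sup>2"] \<open>\<forall>i\<in>UNIV. 0 \<le> _\<close> by auto
  then show ?thesis
  proof (intro ext)
    fix i
    assume h: "\<forall>i\<in>UNIV. w i * (norm (x i - z i))\<^sup>2 = 0"
    have "w i \<noteq> 0" using w by (metis less_irrefl)
    then show "x i = z i" using h by auto
  qed
qed

lemma xstar_eq:
  assumes w: "\<forall>i. w i > 0" and lam: "lam \<ge> 0"
    and mx: "\<forall>y. primal_obj a w lam x \<le> primal_obj a w lam y"
  shows "xstar a w lam = x"
  unfolding xstar_def
  by (rule the_equality) (use mx minimizer_unique[OF w lam] in blast)+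

lemma kkt_optimal:
  fixes \<delta> :: "(('a::euclidean_space,'i::{finite,linorder}) vec, 'i) vec"
  assumes w: "\<forall>i. w i > 0" and lam: "lam \<ge> 0" and K: "KKT a w lam \<delta>"
  shows "dsocp_optimal a w lam \<delta> (bv w \<delta>) (gv w \<delta>)" and "xstar a w lam = xv a w \<delta>"
proof -
  have nb: "\<forall>i j. i < j \<longrightarrow> norm (\<delta>$i$j) \<le> lam" using K unfolding KKT_def by blast
  show "dsocp_optimal a w lam \<delta> (bv w \<delta>) (gv w \<delta>)"
    unfolding dsocp_optimal_def
    using kkt_feasible[OF nb] kkt_value[OF K] weak_duality[OF _ w] by fastforce
  have "\<forall>y. primal_obj a w lam (xv a w \<delta>) \<le> primal_obj a w lam y"
  proof
    fix y
    show "primal_obj a w lam (xv a w \<delta>) \<le> primal_obj a w lam y"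
      using kkt_value[OF K] weak_duality[OF kkt_feasible[OF nb, of w] w, of a y] by linarith
  qed
  then show "xstar a w lam = xv a w \<delta>" using xstar_eq[OF w lam] by blast
qed


lemma anti_lin: "anti (\<delta> + t *\<^sub>R E) i j = anti \<delta> i j + t *\<^sub>R anti E i j"
  by (simp add: anti_def)

lemma sv_lin: "sv w (\<delta> + t *\<^sub>R E) i = sv w \<delta> i + t *\<^sub>R sv w E i"
  unfolding sv_def anti_lin by (simp add: scaleR_sum_right sum.distrib scaleR_add_right mult.commute)

lemma D_expand:
  fixes \<delta> E :: "(('a::euclidean_space,'i::{finite,linorder}) vec, 'i) vec"
  shows "dsocp_obj a w (bv w (\<delta> + t *\<^sub>R E)) (gv w (\<delta> + t *\<^sub>R E)) =
    dsocp_obj a w (bv w \<delta>) (gv w \<delta>)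
    + t * (\<Sum>i\<in>UNIV. \<Sum>j\<in>{j. i < j}. w i * w j * (E$i$j \<bullet> (xv a w \<delta> j - xv a w \<delta> i)))
    - t\<^sup>2 / 2 * (\<Sum>i\<in>UNIV. w i * (norm (sv w E i))\<^sup>2)"
proof -
  let ?s = "sv w \<delta>" and ?e = "sv w E"
  have pt: "a i \<bullet> (- (?s i + t *\<^sub>R ?e i)) + (1 - (norm (- (?s i + t *\<^sub>R ?e i)))\<^sup>2) / 2
      = (a i \<bullet> (- ?s i) + (1 - (norm (- ?s i))\<^sup>2) / 2) - t * ((a i + ?s i) \<bullet> ?e i) - t\<^sup>2 / 2 * (norm (?e i))\<^sup>2" for i
    by (simp only: power2_norm_eq_inner) (simp add: inner_add_left inner_add_right inner_diff_left inner_diff_right inner_commute power2_eq_square field_simps)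
  have "dsocp_obj a w (bv w (\<delta> + t *\<^sub>R E)) (gv w (\<delta> + t *\<^sub>R E)) =
      (\<Sum>i\<in>UNIV. w i * (a i \<bullet> (- (?s i + t *\<^sub>R ?e i)) + (1 - (norm (- (?s i + t *\<^sub>R ?e i)))\<^sup>2) / 2))"
    unfolding dsocp_obj_def bv_def gv_def sv_lin by (simp add: sum.distrib[symmetric] distrib_left)
  also have "\<dots> = (\<Sum>i\<in>UNIV. w i * (a i \<bullet> (- ?s i) + (1 - (norm (- ?s i))\<^sup>2) / 2))
      - t * (\<Sum>i\<in>UNIV. w i * ((a i + ?s i) \<bullet> ?e i)) - t\<^sup>2 / 2 * (\<Sum>i\<in>UNIV. w i * (norm (?e i))\<^sup>2)"
    unfolding pt by (simp add: sum.distrib sum_subtractf sum_distrib_left sum_divide_distrib algebra_simps)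
  also have "(\<Sum>i\<in>UNIV. w i * (a i \<bullet> (- ?s i) + (1 - (norm (- ?s i))\<^sup>2) / 2)) = dsocp_obj a w (bv w \<delta>) (gv w \<delta>)"
    unfolding dsocp_obj_def bv_def gv_def by (simp add: sum.distrib[symmetric] distrib_left right_diff_distrib algebra_simps)
  also have "(\<Sum>i\<in>UNIV. w i * ((a i + ?s i) \<bullet> ?e i)) = (\<Sum>i\<in>UNIV. w i * (xv a w \<delta> i \<bullet> sv w E i))"
    by (simp add: xv_def)
  also have "\<dots> = - (\<Sum>i\<in>UNIV. \<Sum>j\<in>{j. i < j}. w i * w j * (E$i$j \<bullet> (xv a w \<delta> j - xv a w \<delta> i)))"
    unfolding sv_inner by (simp add: sum_negf[symmetric] inner_diff_right algebra_simps)
  finally show ?thesis by simp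
qed

lemma first_order:
  fixes L Q :: real
  assumes "\<forall>t. 0 < t \<and> t \<le> 1 \<longrightarrow> D0 + t * L - t\<^sup>2 / 2 * Q \<le> D0"
  shows "L \<le> 0"
proof (rule ccontr)
  assume "\<not> L \<le> 0"
  then have L: "L > 0" by simp
  define Q' where "Q' = max Q 0"
  define t where "t = min 1 (L / (Q' + 1))"
  have Q': "Q' \<ge> 0" "Q \<le> Q'" by (auto simp: Q'_def)
  have t: "0 < t" "t \<le> 1" using L Q' by (auto simp: t_def)
  have tle: "t \<le> L / (Q' + 1)" by (simp add: t_def)
  have "t * L - t\<^sup>2 / 2 * Q \<le> 0" using assms t by auto
  moreover have "t\<^sup>2 / 2 * Q \<le> t\<^sup>2 / 2 * Q'" using Q' by (intro mult_left_mono) auto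
  moreover have "t * Q' \<le> L / (Q' + 1) * Q'" using tle Q' by (intro mult_right_mono) auto
  moreover have "L / (Q' + 1) * Q' < L" using L Q' by (simp add: field_simps)
  ultimately have "t * L \<le> t * t / 2 * Q'" "t * Q' < L" by (auto simp: power2_eq_square)
  then have "t * L \<le> t * (t * Q') / 2" by simp
  also have "\<dots> < t * L / 2" using t \<open>t * Q' < L\<close> by (intro divide_strict_right_mono mult_strict_left_mono) auto
  finally show False using mult_pos_pos[OF t(1) L] by linarith
qed

lemma nested_zero:
  fixes f :: "'i::{finite,linorder} \<Rightarrow> 'i \<Rightarrow> real"
  assumes nn: "\<forall>i j. i < j \<longrightarrow> 0 \<le> f i j"
    and le: "(\<Sum>i\<in>UNIV. \<Sum>j\<in>{j. i < j}. f i j) \<le> 0" and ij: "i < j"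
  shows "f i j = 0"
proof -
  have inn: "\<forall>i\<in>UNIV. 0 \<le> (\<Sum>j\<in>{j. i < j}. f i j)" using nn by (auto intro: sum_nonneg)
  then have "(\<Sum>i\<in>UNIV. \<Sum>j\<in>{j. i < j}. f i j) = 0" using le by (meson antisym sum_nonneg)
  then have "\<forall>i\<in>UNIV. (\<Sum>j\<in>{j. i < j}. f i j) = 0"
    using sum_nonneg_eq_0_iff[of UNIV "\<lambda>i. \<Sum>j\<in>{j. i < j}. f i j"] inn by auto
  then have "(\<Sum>j\<in>{j. i < j}. f i j) = 0" by simp
  moreover have "\<forall>j\<in>{j. i < j}. 0 \<le> f i j" using nn by auto
  ultimately show ?thesis using sum_nonneg_eq_0_iff[of "{j. i < j}" "f i"] ij by auto
qed

lemma sgn_inner_self: "sgn v \<bullet> v = norm (v::'a::real_inner)"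
  by (cases "v = 0") (simp_all add: sgn_div_norm power2_norm_eq_inner[symmetric] power2_eq_square)

lemma cs_eq:
  fixes u v :: "'a::real_inner"
  assumes "norm u \<le> lam" "u \<bullet> v = lam * norm v" "v \<noteq> 0"
  shows "u = lam *\<^sub>R sgn v"
proof -
  have s: "u \<bullet> sgn v = lam" using assms by (simp add: sgn_div_norm)
  have n: "norm (sgn v) = 1" using assms(3) by (simp add: norm_sgn)
  have "(norm (u - lam *\<^sub>R sgn v))\<^sup>2 = (norm u)\<^sup>2 - 2 * lam * (u \<bullet> sgn v) + lam\<^sup>2 * (norm (sgn v))\<^sup>2"
    by (simp only: power2_norm_eq_inner) (simp add: inner_diff_left inner_diff_right inner_commute algebra_simps power2_eq_square)
  also have "\<dots> = (norm u)\<^sup>2 - lam\<^sup>2" unfolding s n by (simp add: power2_eq_square)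
  also have "\<dots> \<le> 0" using assms(1) by (smt (verit) norm_ge_zero power_mono)
  finally show ?thesis by simp
qed

lemma vec_norm_le_sum: "norm (x::('b::real_normed_vector,'n::finite) vec) \<le> (\<Sum>i\<in>UNIV. norm (x$i))"
  by (simp add: norm_vec_def L2_set_le_sum)

lemma cont_anti[continuous_intros]: "continuous_on S (\<lambda>\<Psi>. anti \<Psi> r s)"
  by (cases "r < s"; cases "s < r") (auto simp: anti_def intro!: continuous_intros)


lemma main_exists:
  fixes a :: "'i::{finite,linorder} \<Rightarrow> 'a::euclidean_space" and c :: "'i \<Rightarrow> 'b"
    and \<delta>' :: "(('a,'i) vec,'i) vec"
  assumes w: "\<forall>i. w i > 0" and lam: "lam \<ge> 0"
    and int_bd: "\<forall>k l. k < l \<and> c k = c l \<longrightarrow> norm (\<delta>'$k$l) \<le> lam"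
    and cc: "\<forall>k k'. c k = c k' \<longrightarrow> a k + (\<Sum>l\<in>{l. c l = c k}. w l *\<^sub>R anti \<delta>' k l)
                                  = a k' + (\<Sum>l\<in>{l. c l = c k'}. w l *\<^sub>R anti \<delta>' k' l)"
  shows "\<exists>\<delta>. (\<forall>k l. \<not> k < l \<longrightarrow> \<delta>$k$l = 0) \<and> (\<forall>k l. k < l \<and> c k = c l \<longrightarrow> \<delta>$k$l = \<delta>'$k$l)
             \<and> KKT a w lam \<delta>"
proof -
  define rep where "rep k = (SOME m. c m = c k)" for k
  have crep: "c (rep k) = c k" for k unfolding rep_def by (rule someI[of _ k]) simp
  have rep_eq: "c k = c k' \<Longrightarrow> rep k = rep k'" for k k' unfolding rep_def by simp
  define G where "G \<Psi> k l = (if c k = c l then anti \<delta>' k l else anti \<Psi> (rep k) (rep l))"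
    for \<Psi> :: "(('a,'i) vec,'i) vec" and k l
  define M where "M \<Psi> = (\<chi> k l. if k < l then G \<Psi> k l else 0)" for \<Psi> :: "(('a,'i) vec,'i) vec"
  have Mnth: "M \<Psi> $ k $ l = (if k < l then G \<Psi> k l else 0)" for \<Psi> k l by (simp add: M_def)
  have antiM: "anti (M \<Psi>) k l = G \<Psi> k l" for \<Psi> k l
  proof -
    consider "k < l" | "l < k" | "k = l" using less_linear by blast
    then show ?thesis
    proof cases
      case 1 then show ?thesis by (simp add: anti_def Mnth)
    next
      case 2 then show ?thesis
        by (auto simp: anti_def Mnth G_def)
    next
      case 3 then show ?thesis by (simp add: G_def)
    qed
  qed
  define B where "B = {\<Psi> :: (('a,'i) vec,'i) vec. \<forall>r s. norm (\<Psi>$r$s) \<le> lam}"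
  define F where "F \<Psi> = dsocp_obj a w (bv w (M \<Psi>)) (gv w (M \<Psi>))" for \<Psi>
  have closedB: "closed B"
  proof -
    have "B = (\<Inter>r. \<Inter>s. {\<Psi>. norm (\<Psi>$r$s) \<le> lam})" by (auto simp: B_def)
    moreover have "closed {\<Psi> :: (('a,'i) vec,'i) vec. norm (\<Psi>$r$s) \<le> lam}" for r s
      by (intro closed_Collect_le continuous_intros)
    ultimately show ?thesis by (simp add: closed_INT)
  qed
  have boundedB: "bounded B"
  proof -
    have "norm \<Psi> \<le> (\<Sum>r\<in>(UNIV::'i set). \<Sum>s\<in>(UNIV::'i set). lam)" if "\<Psi> \<in> B" for \<Psi>
    proof -
      have "norm \<Psi> \<le> (\<Sum>r\<in>UNIV. norm (\<Psi>$r))" by (rule vec_norm_le_sum)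
      also have "\<dots> \<le> (\<Sum>r\<in>UNIV. \<Sum>s\<in>UNIV. norm (\<Psi>$r$s))" by (intro sum_mono vec_norm_le_sum)
      also have "\<dots> \<le> (\<Sum>r\<in>(UNIV::'i set). \<Sum>s\<in>(UNIV::'i set). lam)" using that by (intro sum_mono) (simp add: B_def)
      finally show ?thesis .
    qed
    then show ?thesis unfolding bounded_iff by blast
  qed
  have compactB: "compact B" using closedB boundedB by (simp add: compact_eq_bounded_closed)
  have "0 \<in> B" using lam by (simp add: B_def)
  then have neB: "B \<noteq> {}" by blast
  have contG[continuous_intros]: "continuous_on S (\<lambda>\<Psi>. G \<Psi> k l)" for S k l
    by (cases "c k = c l") (simp_all add: G_def continuous_intros)
  have c1: "continuous_on B (\<lambda>\<Psi>. sv w (M \<Psi>) i)" for i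
    unfolding sv_def antiM
    by (intro continuous_on_sum continuous_on_scaleR continuous_on_const contG)
  have contF: "continuous_on B F"
    unfolding F_def dsocp_obj_def bv_def gv_def
    by (intro continuous_on_add continuous_on_sum continuous_on_mult continuous_on_const
        continuous_on_inner continuous_on_minus c1 continuous_on_divide continuous_on_diff
        continuous_on_power continuous_on_norm) auto
  obtain \<Psi> where \<Psi>B: "\<Psi> \<in> B" and maxF: "\<forall>\<Phi>\<in>B. F \<Phi> \<le> F \<Psi>"
    using continuous_attains_sup[OF compactB neB contF] by blast
  define \<delta> where "\<delta> = M \<Psi>"
  define x where "x = xv a w \<delta>"
  have xsplit: "x k = (a k + (\<Sum>l\<in>{l. c l = c k}. w l *\<^sub>R anti \<delta>' k l))
                 + (\<Sum>l\<in>{l. c l \<noteq> c k}. w l *\<^sub>R anti \<Psi> (rep k) (rep l))" for k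
  proof -
    have "sv w \<delta> k = (\<Sum>l\<in>UNIV. (if c k = c l then w l *\<^sub>R anti \<delta>' k l else w l *\<^sub>R anti \<Psi> (rep k) (rep l)))"
      unfolding sv_def \<delta>_def antiM G_def by (intro sum.cong) auto
    also have "\<dots> = (\<Sum>l\<in>{l. c l = c k}. w l *\<^sub>R anti \<delta>' k l) + (\<Sum>l\<in>{l. c l \<noteq> c k}. w l *\<^sub>R anti \<Psi> (rep k) (rep l))"
    proof -
      have e1: "UNIV \<inter> {l. c k = c l} = {l. c l = c k}" by auto
      have e2: "UNIV \<inter> - {l. c k = c l} = {l. c l \<noteq> c k}" by auto
      show ?thesis
        using sum.If_cases[of UNIV "\<lambda>l. c k = c l" "\<lambda>l. w l *\<^sub>R anti \<delta>' k l" "\<lambda>l. w l *\<^sub>R anti \<Psi> (rep k) (rep l)"]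
        unfolding e1 e2 by simp
    qed
    finally show ?thesis by (simp add: x_def xv_def)
  qed
  have xc: "x k = x k'" if "c k = c k'" for k k'
  proof -
    have r: "rep k = rep k'" using that by (rule rep_eq)
    have s: "{l. c l \<noteq> c k} = {l. c l \<noteq> c k'}" using that by auto
    show ?thesis by (simp only: xsplit r s cc[rule_format, OF that])
  qed
  have xrep: "x (rep k) = x k" for k using xc crep by blast
  define \<Psi>2 where "\<Psi>2 = (\<chi> r s. lam *\<^sub>R sgn (x s - x r))"
  have \<Psi>2B: "\<Psi>2 \<in> B" using lam by (auto simp: B_def \<Psi>2_def norm_sgn)
  define E where "E = M \<Psi>2 - M \<Psi>"
  have Mlin: "M (\<Psi> + t *\<^sub>R (\<Psi>2 - \<Psi>)) = \<delta> + t *\<^sub>R E" for t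
  proof -
    have aL: "anti (\<Psi> + t *\<^sub>R (\<Psi>2 - \<Psi>)) r s = anti \<Psi> r s + t *\<^sub>R (anti \<Psi>2 r s - anti \<Psi> r s)" for r s
      by (simp add: anti_def algebra_simps)
    show ?thesis unfolding vec_eq_iff E_def \<delta>_def
      by (simp add: Mnth G_def aL)
  qed
  have inB: "\<Psi> + t *\<^sub>R (\<Psi>2 - \<Psi>) \<in> B" if "0 \<le> t" "t \<le> 1" for t
  proof -
    have "norm ((\<Psi> + t *\<^sub>R (\<Psi>2 - \<Psi>))$r$s) \<le> lam" for r s
    proof -
      have "(\<Psi> + t *\<^sub>R (\<Psi>2 - \<Psi>))$r$s = (1 - t) *\<^sub>R (\<Psi>$r$s) + t *\<^sub>R (\<Psi>2$r$s)"
        by (simp add: algebra_simps)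
      also have "norm \<dots> \<le> (1 - t) * norm (\<Psi>$r$s) + t * norm (\<Psi>2$r$s)"
        by (rule order_trans[OF norm_triangle_ineq]) (simp add: that abs_of_nonneg)
      also have "\<dots> \<le> (1 - t) * lam + t * lam"
        using \<Psi>B \<Psi>2B that by (intro add_mono mult_left_mono) (auto simp: B_def)
      finally show ?thesis by (simp add: algebra_simps)
    qed
    then show ?thesis by (simp add: B_def)
  qed
  let ?L = "(\<Sum>i\<in>UNIV. \<Sum>j\<in>{j. i < j}. w i * w j * (E$i$j \<bullet> (x j - x i)))"
  have "?L \<le> 0"
  proof (rule first_order[of "F \<Psi>" _ "\<Sum>i\<in>UNIV. w i * (norm (sv w E i))\<^sup>2"], intro allI impI)
    fix t :: real assume t: "0 < t \<and> t \<le> 1"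
    have "F (\<Psi> + t *\<^sub>R (\<Psi>2 - \<Psi>)) \<le> F \<Psi>" using maxF inB t by auto
    then show "F \<Psi> + t * ?L - t\<^sup>2 / 2 * (\<Sum>i\<in>UNIV. w i * (norm (sv w E i))\<^sup>2) \<le> F \<Psi>"
      unfolding F_def Mlin D_expand by (simp add: \<delta>_def x_def)
  qed
  have \<delta>ext: "\<delta>$k$l = anti \<Psi> (rep k) (rep l)" if "k < l" "c k \<noteq> c l" for k l
    using that by (simp add: \<delta>_def Mnth G_def)
  have \<delta>int: "\<delta>$k$l = \<delta>'$k$l" if "k < l" "c k = c l" for k l
    using that by (simp add: \<delta>_def Mnth G_def anti_def)
  have Eext: "E$k$l = lam *\<^sub>R sgn (x l - x k) - \<delta>$k$l" if "k < l" "c k \<noteq> c l" for k l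
  proof -
    have rne: "rep k \<noteq> rep l" using crep that by metis
    have "anti \<Psi>2 (rep k) (rep l) = lam *\<^sub>R sgn (x l - x k)"
    proof (cases "rep k < rep l")
      case True then show ?thesis by (simp add: anti_def \<Psi>2_def xrep)
    next
      case False
      then have "rep l < rep k" using rne by auto
      have sg: "sgn (x l - x k) = - sgn (x k - x l)" by (metis minus_diff_eq sgn_minus)
      show ?thesis using False \<open>rep l < rep k\<close>
        by (simp add: anti_def \<Psi>2_def xrep sg)
    qed
    then show ?thesis using that by (simp add: E_def Mnth G_def \<delta>_def)
  qed
  have Eint: "E$k$l = 0" if "k < l" "c k = c l" for k l
    using that by (simp add: E_def Mnth G_def)
  have nb: "norm (\<delta>$k$l) \<le> lam" if "k < l" for k l
  proof (cases "c k = c l")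
    case True then show ?thesis using int_bd that \<delta>int by auto
  next
    case False
    have "norm (anti \<Psi> r s) \<le> lam" for r s using \<Psi>B lam by (auto simp: anti_def B_def)
    then show ?thesis using \<delta>ext[OF that False] by simp
  qed
  define f where "f i j = w i * w j * (E$i$j \<bullet> (x j - x i))" for i j
  have fnn: "\<forall>i j. i < j \<longrightarrow> 0 \<le> f i j"
  proof (intro allI impI)
    fix i j :: 'i assume ij: "i < j"
    show "0 \<le> f i j"
    proof (cases "c i = c j")
      case True then show ?thesis by (simp add: f_def Eint[OF ij])
    next
      case False
      have "\<delta>$i$j \<bullet> (x j - x i) \<le> lam * norm (x j - x i)" using nb[OF ij] by (rule inner_le_lam)
      then have "0 \<le> E$i$j \<bullet> (x j - x i)"
        by (simp add: Eext[OF ij False] inner_diff_left sgn_inner_self)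
      then show ?thesis using w by (simp add: f_def less_imp_le)
    qed
  qed
  have KKT: "KKT a w lam \<delta>"
    unfolding KKT_def
  proof (intro allI impI conjI)
    fix i j :: 'i assume ij: "i < j"
    show "norm (\<delta>$i$j) \<le> lam" using nb[OF ij] .
    show "\<delta>$i$j \<bullet> (xv a w \<delta> j - xv a w \<delta> i) = lam * norm (xv a w \<delta> j - xv a w \<delta> i)"
    proof (cases "c i = c j")
      case True then show ?thesis using xc[of i j] by (simp add: x_def)
    next
      case False
      have "f i j = 0" using nested_zero[OF fnn _ ij] \<open>?L \<le> 0\<close> by (simp add: f_def)
      then have "E$i$j \<bullet> (x j - x i) = 0" using w by (simp add: f_def) (metis less_irrefl)
      then show ?thesis by (simp add: Eext[OF ij False] inner_diff_left sgn_inner_self x_def)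
    qed
  qed
  have z: "\<forall>k l. \<not> k < l \<longrightarrow> \<delta>$k$l = 0" by (simp add: \<delta>_def Mnth)
  show ?thesis using z \<delta>int KKT by blast
qed


lemma relint_strict:
  fixes S :: "((('a::euclidean_space,'i::{finite,linorder}) vec, 'i) vec) set"
  assumes ri: "\<delta>a \<in> rel_interior S" and dS: "\<delta> \<in> S"
    and bd: "\<forall>z\<in>S. norm (z$i$j) \<le> lam" and lt: "norm (\<delta>$i$j) < lam"
  shows "norm (\<delta>a$i$j) < lam"
proof -
  obtain e where e: "e > 0" and sub: "cball \<delta>a e \<inter> affine hull S \<subseteq> S" and aS: "\<delta>a \<in> S"
    using ri mem_rel_interior_cball by blast
  define \<epsilon> where "\<epsilon> = e / (norm (\<delta>a - \<delta>) + 1)"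
  have \<epsilon>: "\<epsilon> > 0" using e unfolding \<epsilon>_def by (intro divide_pos_pos) (auto intro: add_nonneg_pos)
  have \<epsilon>le: "\<epsilon> * norm (\<delta>a - \<delta>) \<le> e"
  proof -
    have "\<epsilon> * norm (\<delta>a - \<delta>) \<le> \<epsilon> * (norm (\<delta>a - \<delta>) + 1)" using \<epsilon> by simp
    also have "\<dots> = e" unfolding \<epsilon>_def by (smt (verit) nonzero_eq_divide_eq norm_ge_zero)
    finally show ?thesis .
  qed
  define z where "z = (1 + \<epsilon>) *\<^sub>R \<delta>a + (- \<epsilon>) *\<^sub>R \<delta>"
  have "z \<in> affine hull S"
    unfolding z_def by (rule mem_affine[OF affine_affine_hull hull_inc[OF aS] hull_inc[OF dS]]) simp
  moreover have "z \<in> cball \<delta>a e"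
  proof -
    have "\<delta>a - z = \<epsilon> *\<^sub>R (\<delta> - \<delta>a)" by (simp add: z_def algebra_simps)
    then have "dist \<delta>a z = \<epsilon> * norm (\<delta>a - \<delta>)" using \<epsilon> by (simp add: dist_norm norm_minus_commute)
    then show ?thesis using \<epsilon>le by simp
  qed
  ultimately have "z \<in> S" using sub by blast
  then have zb: "norm (z$i$j) \<le> lam" using bd by blast
  have eq: "(1 + \<epsilon>) *\<^sub>R (\<delta>a$i$j) = z$i$j + \<epsilon> *\<^sub>R (\<delta>$i$j)" by (simp add: z_def)
  have "(1 + \<epsilon>) * norm (\<delta>a$i$j) = norm (z$i$j + \<epsilon> *\<^sub>R (\<delta>$i$j))"
    using \<epsilon> by (metis eq norm_scaleR abs_of_pos add_pos_pos zero_less_one)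
  also have "\<dots> \<le> norm (z$i$j) + \<epsilon> * norm (\<delta>$i$j)"
    using \<epsilon> by (metis norm_triangle_ineq norm_scaleR abs_of_pos)
  also have "\<dots> < lam + \<epsilon> * lam" using zb lt \<epsilon> by (simp add: add_le_less_mono)
  finally have "(1 + \<epsilon>) * norm (\<delta>a$i$j) < (1 + \<epsilon>) * lam" by (simp add: algebra_simps)
  then show ?thesis using \<epsilon> by (smt (verit) mult_le_cancel_left_pos)
qed

lemma anti_sgn:
  fixes \<delta> :: "(('a::euclidean_space,'i::{finite,linorder}) vec, 'i) vec"
  assumes K: "KKT a w lam \<delta>" and ne: "xv a w \<delta> k \<noteq> xv a w \<delta> l"
  shows "anti \<delta> k l = lam *\<^sub>R sgn (xv a w \<delta> l - xv a w \<delta> k)"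
proof -
  let ?x = "xv a w \<delta>"
  consider "k < l" | "l < k" | "k = l" using less_linear by blast
  then show ?thesis
  proof cases
    case 1
    then have "\<delta>$k$l = lam *\<^sub>R sgn (?x l - ?x k)" using K ne unfolding KKT_def by (intro cs_eq) auto
    then show ?thesis using 1 by (simp add: anti_def)
  next
    case 2
    then have "\<delta>$l$k = lam *\<^sub>R sgn (?x k - ?x l)" using K ne unfolding KKT_def by (intro cs_eq) auto
    moreover have "sgn (?x l - ?x k) = - sgn (?x k - ?x l)" by (metis minus_diff_eq sgn_minus)
    ultimately show ?thesis using 2 by (auto simp: anti_def)
  next
    case 3 then show ?thesis using ne by simp
  qed
qed

lemma strict_exists:
  fixes a :: "'i::{finite,linorder} \<Rightarrow> 'a::euclidean_space"
  assumes w: "\<forall>i. w i > 0" and lam: "lam > 0" and nf: "\<not> fusion_value a w lam"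
    and ij: "i < j" and sc: "xstar a w lam i = xstar a w lam j"
  shows "\<exists>\<delta>\<in>dsocp_delta_set a w lam. norm (\<delta>$i$j) < lam"
proof -
  obtain lam' where l': "0 < lam'" "lam' < lam" and sc': "xstar a w lam' i = xstar a w lam' j"
    using nf lam ij sc unfolding fusion_value_def by (metis less_irrefl)
  obtain \<delta>0 :: "(('a,'i) vec,'i) vec" where K0: "KKT a w lam' \<delta>0"
    using main_exists[of w lam' "\<lambda>k. k" 0 a] w l' by auto
  have x0: "xstar a w lam' = xv a w \<delta>0" using kkt_optimal(2)[OF w _ K0] l' by simp
  define c where "c = xv a w \<delta>0"
  have bd0: "norm (\<delta>0$k$l) \<le> lam'" if "k < l" for k l using K0 that unfolding KKT_def by blast
  have split: "c k = a k + (\<Sum>l\<in>{l. c l = c k}. w l *\<^sub>R anti \<delta>0 k l) + (\<Sum>l\<in>{l. c l \<noteq> c k}. w l *\<^sub>R anti \<delta>0 k l)" for k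
  proof -
    have "sv w \<delta>0 k = (\<Sum>l\<in>{l. c l = c k}. w l *\<^sub>R anti \<delta>0 k l) + (\<Sum>l\<in>{l. c l \<noteq> c k}. w l *\<^sub>R anti \<delta>0 k l)"
      unfolding sv_def using sum.If_cases[of UNIV "\<lambda>l. c l = c k" "\<lambda>l. w l *\<^sub>R anti \<delta>0 k l" "\<lambda>l. w l *\<^sub>R anti \<delta>0 k l"]
      by (simp add: Collect_neg_eq[symmetric])
    then show ?thesis by (simp add: c_def xv_def add.assoc)
  qed
  have ext: "(\<Sum>l\<in>{l. c l \<noteq> c k}. w l *\<^sub>R anti \<delta>0 k l) = (\<Sum>l\<in>{l. c l \<noteq> c k}. w l *\<^sub>R (lam' *\<^sub>R sgn (c l - c k)))" for k
    by (intro sum.cong refl) (simp add: anti_sgn[OF K0] c_def)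
  have cc: "\<forall>k k'. c k = c k' \<longrightarrow> a k + (\<Sum>l\<in>{l. c l = c k}. w l *\<^sub>R anti \<delta>0 k l)
                                  = a k' + (\<Sum>l\<in>{l. c l = c k'}. w l *\<^sub>R anti \<delta>0 k' l)"
  proof (intro allI impI)
    fix k k' assume e: "c k = c k'"
    have "a k + (\<Sum>l\<in>{l. c l = c k}. w l *\<^sub>R anti \<delta>0 k l) = c k - (\<Sum>l\<in>{l. c l \<noteq> c k}. w l *\<^sub>R (lam' *\<^sub>R sgn (c l - c k)))"
      using split[of k] ext[of k] by (simp add: algebra_simps)
    also have "\<dots> = c k' - (\<Sum>l\<in>{l. c l \<noteq> c k'}. w l *\<^sub>R (lam' *\<^sub>R sgn (c l - c k')))" using e by simp
    also have "\<dots> = a k' + (\<Sum>l\<in>{l. c l = c k'}. w l *\<^sub>R anti \<delta>0 k' l)"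
      using split[of k'] ext[of k'] by (simp add: algebra_simps)
    finally show "a k + (\<Sum>l\<in>{l. c l = c k}. w l *\<^sub>R anti \<delta>0 k l) = a k' + (\<Sum>l\<in>{l. c l = c k'}. w l *\<^sub>R anti \<delta>0 k' l)" .
  qed
  have ib: "\<forall>k l. k < l \<and> c k = c l \<longrightarrow> norm (\<delta>0$k$l) \<le> lam" using bd0 l' by force
  obtain \<delta> where z: "\<forall>k l. \<not> k < l \<longrightarrow> \<delta>$k$l = 0" and int: "\<forall>k l. k < l \<and> c k = c l \<longrightarrow> \<delta>$k$l = \<delta>0$k$l"
    and K: "KKT a w lam \<delta>"
    using main_exists[OF w _ ib cc] lam by auto
  have "\<delta> \<in> dsocp_delta_set a w lam"
    unfolding dsocp_delta_set_def using z kkt_optimal(1)[OF w _ K] lam by auto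
  moreover have "c i = c j" using sc' x0 c_def by simp
  then have "norm (\<delta>$i$j) < lam" using int ij bd0[OF ij] l' by auto
  ultimately show ?thesis by blast
qed


theorem lemma7p2:
  fixes a :: "'i::{finite,linorder} \<Rightarrow> 'a::euclidean_space"
    and w :: "'i \<Rightarrow> real"
    and lam p' \<mu> :: real
    and \<delta>a :: "(('a, 'i) vec, 'i) vec"
  assumes "CARD('i) \<ge> 2"
    and "\<forall>i. w i > 0"
    and "lam > 0"
    and "\<not> fusion_value a w lam"
    and "\<delta>a \<in> rel_interior (dsocp_delta_set a w lam)"
    and "p' \<ge> 0" and "\<mu> \<ge> 0"
  shows "(cluster_pairs a w lam \<noteq> {} \<longrightarrow> cluster_gap a w lam \<delta>a > 0) \<and>
         (\<forall>\<delta> :: (('a, 'i) vec, 'i) vec.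
            (\<forall>i j. i < j \<longrightarrow> norm (\<delta>$i$j - \<delta>a$i$j) \<le> p' * \<mu>) \<longrightarrow>
            (\<forall>i j. i < j \<and> same_cluster a w lam i j \<longrightarrow>
                norm (\<delta>$i$j) \<le> lam - cluster_gap a w lam \<delta>a + p' * \<mu>))"
proof -
  note w = assms(2) and lam = assms(3) and nf = assms(4) and ri = assms(5)
  let ?S = "dsocp_delta_set a w lam"
  let ?g = "cluster_gap a w lam \<delta>a"
  let ?f = "\<lambda>(l, l'). lam - norm (\<delta>a$l$l')"
  have fin: "finite (cluster_pairs a w lam)" by simp
  have bdS: "\<forall>z\<in>?S. norm (z$i$j) \<le> lam" if "i < j" for i j
    using that unfolding dsocp_delta_set_def dsocp_optimal_def dsocp_feasible_def by blast
  have strict: "norm (\<delta>a$i$j) < lam" if "(i, j) \<in> cluster_pairs a w lam" for i j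
  proof -
    have ij: "i < j" and sc: "xstar a w lam i = xstar a w lam j"
      using that unfolding cluster_pairs_def same_cluster_def by auto
    obtain \<delta> where "\<delta> \<in> ?S" "norm (\<delta>$i$j) < lam" using strict_exists[OF w lam nf ij sc] by blast
    then show ?thesis using relint_strict[OF ri _ bdS[OF ij]] by blast
  qed
  have gle: "?g \<le> lam - norm (\<delta>a$i$j)" if "(i, j) \<in> cluster_pairs a w lam" for i j
    unfolding cluster_gap_def using that fin by (intro Min_le) force+
  have part1: "cluster_pairs a w lam \<noteq> {} \<longrightarrow> ?g > 0"
  proof
    assume ne: "cluster_pairs a w lam \<noteq> {}"
    show "?g > 0" unfolding cluster_gap_def
      using fin ne strict by (subst Min_gr_iff) auto
  qed
  have part2: "\<forall>\<delta> :: (('a, 'i) vec, 'i) vec.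
            (\<forall>i j. i < j \<longrightarrow> norm (\<delta>$i$j - \<delta>a$i$j) \<le> p' * \<mu>) \<longrightarrow>
            (\<forall>i j. i < j \<and> same_cluster a w lam i j \<longrightarrow>
                norm (\<delta>$i$j) \<le> lam - ?g + p' * \<mu>)"
  proof (intro allI impI, elim conjE)
    fix \<delta> :: "(('a, 'i) vec, 'i) vec" and i j
    assume hb: "\<forall>i j. i < j \<longrightarrow> norm (\<delta>$i$j - \<delta>a$i$j) \<le> p' * \<mu>" and ij: "i < j"
      and sc: "same_cluster a w lam i j"
    have "(i, j) \<in> cluster_pairs a w lam" using ij sc by (simp add: cluster_pairs_def)
    then have "norm (\<delta>a$i$j) \<le> lam - ?g" using gle by force
    moreover have "norm (\<delta>$i$j) \<le> norm (\<delta>a$i$j) + norm (\<delta>$i$j - \<delta>a$i$j)"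
      by (metis add_diff_cancel_left' norm_triangle_ineq add.commute diff_add_cancel)
    ultimately show "norm (\<delta>$i$j) \<le> lam - ?g + p' * \<mu>" using hb ij by fastforce
  qed
  show ?thesis using part1 part2 by blast
qed

end
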